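(* There is a uniform constant $L>0$ such that for all $m,n\in\mathbb N$ the diagonal operator \[D(m,n):\mathbb C^{\mathcal M(m,n),s}\to\mathbb C^{\mathcal J(m,n)},\qquad (a_{\mathbf i})_{\mathbf i\in\mathcal M(m,n)}\mapsto\big(\operatorname{card}[\mathbf j]^{\frac{m+1}{2m}}a_{\mathbf j}\big)_{\mathbf j\in\mathcal J(m,n)}\] satisfies \[\big\|D(m,n):\ell^s_{\frac{2m}{m+1},1}(\mathcal M(m,n))\to\ell_{\frac{2m}{m+1},1}(\mathcal J(m,n))\big\|\le L\,m.\]
   Context: $\mathcal M(m,n)=\{(i_1,\dots,i_m):1\le i_k\le n\}$, $\mathcal J(m,n)=\{\mathbf j\in\mathcal M(m,n):j_1\le\dots\le j_m\}$. For $\mathbf i\in\mathcal M(m,n)$, $[\mathbf i]$ is the set of all $\mathbf j$ obtained from $\mathbf i$ by permuting its coordinates. $\mathbb C^{\mathcal M(m,n),s}$ is the space of symmetric matrices, i.e. $a_{\mathbf i}=a_{\mathbf j}$ whenever $\mathbf j\in[\mathbf i]$. For finite $I$ and $1<p<\infty$, $\|x\|_{\ell_{p,1}(I)}=\sum_kx_k^*(k^{1/p}-(k-1)^{1/p})$, $x^*$ the non-increasing rearrangement of $(|x_i|)$; $\ell^s_{p,1}(\mathcal M(m,n))$ denotes $\mathbb C^{\mathcal M(m,n),s}$ with the norm of $\ell_{p,1}(\mathcal M(m,n))$. *)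

theory Defs
  imports "HOL-Analysis.Analysis" "HOL-Library.Multiset"
begin

definition MI :: "nat \<Rightarrow> nat \<Rightarrow> nat list set" where
  "MI m n = {xs. length xs = m \<and> set xs \<subseteq> {1..n}}"

definition JI :: "nat \<Rightarrow> nat \<Rightarrow> nat list set" where
  "JI m n = {xs \<in> MI m n. sorted xs}"

definition perm_class :: "nat \<Rightarrow> nat \<Rightarrow> nat list \<Rightarrow> nat list set" where
  "perm_class m n i = {j \<in> MI m n. mset j = mset i}"

definition symmetric_mat :: "nat \<Rightarrow> nat \<Rightarrow> (nat list \<Rightarrow> complex) \<Rightarrow> bool" where
  "symmetric_mat m n a \<longleftrightarrow> (\<forall>i\<in>MI m n. \<forall>j\<in>perm_class m n i. a j = a i)"

definition decr_rearr :: "'a set \<Rightarrow> ('a \<Rightarrow> complex) \<Rightarrow> real list" where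
  "decr_rearr I x = rev (sorted_list_of_multiset (image_mset (\<lambda>i. cmod (x i)) (mset_set I)))"

text \<open>Lorentz norm ||x||_{p,1} = sum_k x*_k (k^{1/p} - (k-1)^{1/p}), k = 1..card I.\<close>
definition lorentz_norm :: "real \<Rightarrow> 'a set \<Rightarrow> ('a \<Rightarrow> complex) \<Rightarrow> real" where
  "lorentz_norm p I x =
     (\<Sum>k<card I. decr_rearr I x ! k * (real (Suc k) powr (1 / p) - real k powr (1 / p)))"

end

theory Submission
  imports Defs "HOL-Library.Discrete_Functions"
begin

lemma powr_subadd2:
  fixes a b \<alpha> :: real
  assumes "0 \<le> a" "0 \<le> b" "0 < \<alpha>" "\<alpha> \<le> 1"
  shows "(a + b) powr \<alpha> \<le> a powr \<alpha> + b powr \<alpha>"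
proof (cases "a = 0 \<or> b = 0")
  case True then show ?thesis using assms by auto
next
  case False
  then have a: "a > 0" and b: "b > 0" using assms by auto
  have "a powr (\<alpha> - 1) \<ge> (a+b) powr (\<alpha> - 1)"
    using a b assms by (intro powr_mono2') auto
  hence "a * (a+b) powr (\<alpha> - 1) \<le> a * a powr (\<alpha> - 1)"
    using a by (intro mult_left_mono) auto
  hence 1: "a * (a+b) powr (\<alpha> - 1) \<le> a powr \<alpha>"
    using a by (simp add: powr_mult_base)
  have "b powr (\<alpha> - 1) \<ge> (a+b) powr (\<alpha> - 1)"
    using a b assms by (intro powr_mono2') auto
  hence "b * (a+b) powr (\<alpha> - 1) \<le> b * b powr (\<alpha> - 1)"
    using b by (intro mult_left_mono) auto
  hence 2: "b * (a+b) powr (\<alpha> - 1) \<le> b powr \<alpha>"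
    using b by (simp add: powr_mult_base)
  have "(a + b) powr \<alpha> = (a+b) * (a+b) powr (\<alpha> - 1)"
    using a b by (simp add: powr_mult_base)
  also have "\<dots> = a * (a+b) powr (\<alpha> - 1) + b * (a+b) powr (\<alpha> - 1)" by (simp add: algebra_simps)
  finally show ?thesis using 1 2 by linarith
qed

lemma powr_subadd_sum:
  fixes f :: "'a \<Rightarrow> real"
  assumes "finite S" "\<And>x. x \<in> S \<Longrightarrow> 0 \<le> f x" "0 < \<alpha>" "\<alpha> \<le> 1"
  shows "(\<Sum>x\<in>S. f x) powr \<alpha> \<le> (\<Sum>x\<in>S. f x powr \<alpha>)"
  using assms
proof (induction S rule: finite_induct)
  case empty then show ?case by simp
next
  case (insert x F)
  have "(\<Sum>x\<in>insert x F. f x) powr \<alpha> = (f x + (\<Sum>x\<in>F. f x)) powr \<alpha>" using insert by simp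
  also have "\<dots> \<le> f x powr \<alpha> + (\<Sum>x\<in>F. f x) powr \<alpha>"
    using insert by (intro powr_subadd2 sum_nonneg) auto
  also have "\<dots> \<le> f x powr \<alpha> + (\<Sum>x\<in>F. f x powr \<alpha>)" using insert by auto
  finally show ?case using insert by simp
qed

lemma powr_holder_sum:
  fixes f :: "'a \<Rightarrow> real"
  assumes "finite S" "S \<noteq> {}" "\<And>x. x \<in> S \<Longrightarrow> 0 \<le> f x" "0 < \<alpha>" "\<alpha> \<le> 1"
  shows "(\<Sum>x\<in>S. f x powr \<alpha>) \<le> real (card S) powr (1 - \<alpha>) * (\<Sum>x\<in>S. f x) powr \<alpha>"
proof (cases "(\<Sum>x\<in>S. f x) = 0")
  case True
  then have "\<forall>x\<in>S. f x = 0" using assms sum_nonneg_eq_0_iff by blast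
  then show ?thesis by simp
next
  case False
  define A where "A = (\<Sum>x\<in>S. f x)"
  define R where "R = real (card S)"
  have A: "A > 0" using False assms unfolding A_def by (metis less_eq_real_def sum_nonneg)
  have R: "R > 0" using assms unfolding R_def by (simp add: card_gt_0_iff)
  have key: "f x powr \<alpha> * (A/R) powr (1 - \<alpha>) \<le> \<alpha> * f x + (1-\<alpha>) * (A/R)" if "x \<in> S" for x
  proof (cases "f x = 0")
    case True then show ?thesis using assms A R by auto
  next
    case False
    then have "f x > 0" using assms(3)[OF that] by linarith
    then show ?thesis using Youngs_inequality_0[of \<alpha> "1-\<alpha>" "f x" "A/R"] assms that A R by auto
  qed
  have "(\<Sum>x\<in>S. f x powr \<alpha>) * (A/R) powr (1 - \<alpha>) = (\<Sum>x\<in>S. f x powr \<alpha> * (A/R) powr (1 - \<alpha>))"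
    by (simp add: sum_distrib_right)
  also have "\<dots> \<le> (\<Sum>x\<in>S. \<alpha> * f x + (1-\<alpha>) * (A/R))" by (intro sum_mono key)
  also have "\<dots> = \<alpha> * A + R * ((1-\<alpha>)*(A/R))" unfolding A_def R_def by (simp add: sum.distrib sum_distrib_left)
  also have "\<dots> = \<alpha> * A + (1 - \<alpha>) * A" using R by simp
  also have "\<dots> = A" by (simp add: algebra_simps)
  finally have 1: "(\<Sum>x\<in>S. f x powr \<alpha>) * (A/R) powr (1 - \<alpha>) \<le> A" .
  have pos: "(A/R) powr (1 - \<alpha>) > 0" using A R by simp
  have "(\<Sum>x\<in>S. f x powr \<alpha>) \<le> A / (A/R) powr (1 - \<alpha>)" using 1 pos by (simp add: pos_le_divide_eq)
  also have "A / (A/R) powr (1 - \<alpha>) = R powr (1 - \<alpha>) * A powr \<alpha>"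
    using A R by (simp add: powr_divide powr_diff divide_simps)
  finally show ?thesis unfolding A_def R_def .
qed

lemma downclosed_nat:
  fixes S :: "nat set"
  assumes "finite S" "\<And>k k'. k \<in> S \<Longrightarrow> k' \<le> k \<Longrightarrow> k' \<in> S"
  shows "S = {..<card S}"
proof (cases "S = {}")
  case True then show ?thesis by simp
next
  case False
  define M where "M = Max S"
  have "S = {..M}"
  proof
    show "S \<subseteq> {..M}" using assms(1) unfolding M_def by auto
    show "{..M} \<subseteq> S" using assms(2) Max_in[OF assms(1) False] unfolding M_def by auto
  qed
  then show ?thesis by (simp add: lessThan_Suc_atMost)
qed

definition Phi :: "(real \<Rightarrow> real) \<Rightarrow> ennreal" where
  "Phi h = (\<integral>\<^sup>+t. ennreal (h t) * indicator {0..} t \<partial>lborel)"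

lemma layer_cake:
  fixes x :: "'a \<Rightarrow> complex"
  assumes fin: "finite I" and p: "p > 0"
  shows "ennreal (lorentz_norm p I x) = Phi (\<lambda>t. real (card {i\<in>I. cmod (x i) > t}) powr (1/p))"
proof -
  define \<alpha> where "\<alpha> = 1/p"
  have \<alpha>: "\<alpha> > 0" using p unfolding \<alpha>_def by simp
  define f where "f = (\<lambda>i. cmod (x i))"
  define L where "L = decr_rearr I x"
  define N where "N = card I"
  define w where "w = (\<lambda>k::nat. real (Suc k) powr \<alpha> - real k powr \<alpha>)"
  define S where "S = sorted_list_of_multiset (image_mset f (mset_set I))"
  have LS: "L = rev S" unfolding L_def S_def decr_rearr_def f_def by simp
  have mS: "mset S = image_mset f (mset_set I)" unfolding S_def by simp
  have len: "length L = N" unfolding LS N_def using fin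
    by (metis length_rev mS size_image_mset size_mset size_mset_set)
  have sS: "sorted S" unfolding S_def by simp
  have mono: "L ! k \<le> L ! k'" if "k' \<le> k" "k < N" for k k'
  proof -
    have lS: "length S = N" using len LS by simp
    have "L ! k = S ! (N - Suc k)" "L ! k' = S ! (N - Suc k')" using that lS unfolding LS by (auto simp: rev_nth)
    moreover have "S ! (N - Suc k) \<le> S ! (N - Suc k')" using that lS sS by (intro sorted_nth_mono) auto
    ultimately show ?thesis by simp
  qed
  have nonneg: "L ! k \<ge> 0" if "k < N" for k
  proof -
    have "L ! k \<in> set L" using that len by simp
    also have "set L = set_mset (mset S)" unfolding LS by simp
    also have "\<dots> = f ` I" using fin mS by simp
    finally show ?thesis unfolding f_def by auto
  qed
  have w: "w k \<ge> 0" for k unfolding w_def using \<alpha> by (simp add: powr_mono2)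
  have cnt: "card {i\<in>I. f i > t} = card {k. k < N \<and> L ! k > t}" for t
  proof -
    have "card {i\<in>I. f i > t} = size (filter_mset (\<lambda>i. f i > t) (mset_set I))"
      using fin by simp
    also have "\<dots> = size (image_mset f (filter_mset (\<lambda>i. f i > t) (mset_set I)))" by simp
    also have "\<dots> = size (filter_mset (\<lambda>v. v > t) (mset L))"
      unfolding LS by (simp add: mS filter_mset_image_mset)
    also have "\<dots> = length (filter (\<lambda>v. v > t) L)" by (metis mset_filter size_mset)
    also have "\<dots> = card {k. k < N \<and> L ! k > t}" by (simp add: length_filter_conv_card len)
    finally show ?thesis .
  qed
  have pt: "real (card {i\<in>I. f i > t}) powr \<alpha> = (\<Sum>k<N. w k * indicator {..<L!k} t)" for t
  proof -
    define K where "K = card {k. k < N \<and> L ! k > t}"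
    have KS: "{k. k < N \<and> L ! k > t} = {..<K}" unfolding K_def
    proof (rule downclosed_nat)
      fix k k' assume "k \<in> {k. k < N \<and> L ! k > t}" "k' \<le> k"
      then show "k' \<in> {k. k < N \<and> L ! k > t}" using mono[of k' k] by auto
    qed auto
    have "(\<Sum>k<N. w k * indicator {..<L!k} t) = (\<Sum>k<N. if L!k > t then w k else 0)"
      by (intro sum.cong) (auto simp: indicator_def)
    also have "\<dots> = (\<Sum>k\<in>{k\<in>{..<N}. L ! k > t}. w k)"
      by (rule sum.inter_filter[symmetric]) simp
    also have "{k\<in>{..<N}. L ! k > t} = {..<K}" using KS by auto
    also have "(\<Sum>k<K. w k) = real K powr \<alpha>" unfolding w_def
      by (subst sum_lessThan_telescope) simp
    finally show ?thesis using cnt K_def by simp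
  qed
  have "Phi (\<lambda>t. real (card {i\<in>I. f i > t}) powr \<alpha>)
      = (\<integral>\<^sup>+t. (\<Sum>k<N. ennreal (w k) * indicator {0..<L!k} t) \<partial>lborel)"
    unfolding Phi_def pt
  proof (intro nn_integral_cong)
    fix t :: real
    show "ennreal (\<Sum>k<N. w k * indicator {..<L ! k} t) * indicator {0..} t =
          (\<Sum>k<N. ennreal (w k) * indicator {0..<L ! k} t)"
      using w by (auto simp: indicator_def ennreal_mult' sum_nonneg intro!: sum.cong)
  qed
  also have "\<dots> = (\<Sum>k<N. ennreal (w k) * emeasure lborel {0..<L!k})"
    by (subst nn_integral_sum) (auto simp: nn_integral_cmult_indicator)
  also have "\<dots> = (\<Sum>k<N. ennreal (L!k * w k))"
    using nonneg w by (intro sum.cong) (auto simp: ennreal_mult' mult.commute)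
  also have "\<dots> = ennreal (\<Sum>k<N. L!k * w k)"
    using nonneg w by (intro sum_ennreal) auto
  also have "(\<Sum>k<N. L!k * w k) = lorentz_norm p I x"
    unfolding lorentz_norm_def L_def N_def w_def \<alpha>_def by simp
  finally show ?thesis unfolding f_def \<alpha>_def by simp
qed

lemma meas_wcnt:
  fixes v cc :: "'a \<Rightarrow> real"
  assumes "finite A"
  shows "(\<lambda>t. \<Sum>j\<in>{j\<in>A. v j > t}. cc j) \<in> borel_measurable borel"
proof -
  have "(\<lambda>t. \<Sum>j\<in>{j\<in>A. v j > t}. cc j) = (\<lambda>t. \<Sum>j\<in>A. cc j * indicator {..<v j} t)"
  proof
    fix t
    have "(\<Sum>j\<in>{j\<in>A. v j > t}. cc j) = (\<Sum>j\<in>A. if v j > t then cc j else 0)"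
      by (rule sum.inter_filter) (rule assms)
    also have "\<dots> = (\<Sum>j\<in>A. cc j * indicator {..<v j} t)"
      by (intro sum.cong) (auto simp: indicator_def)
    finally show "(\<Sum>j\<in>{j\<in>A. v j > t}. cc j) = (\<Sum>j\<in>A. cc j * indicator {..<v j} t)" .
  qed
  also have "\<dots> \<in> borel_measurable borel" by measurable
  finally show ?thesis .
qed

lemma meas_card:
  fixes v :: "'a \<Rightarrow> real"
  assumes "finite A"
  shows "(\<lambda>t. real (card {j\<in>A. v j > t})) \<in> borel_measurable borel"
proof -
  have *: "(\<lambda>t. \<Sum>j\<in>{j\<in>A. v j > t}. (1::real)) = (\<lambda>t. real (card {j\<in>A. v j > t}))" by simp
  show ?thesis using meas_wcnt[OF assms, where v=v and cc="\<lambda>_. 1"] unfolding * .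
qed


lemma Phi_mono:
  assumes "\<And>t. t \<ge> 0 \<Longrightarrow> h t \<le> h' t"
  shows "Phi h \<le> Phi h'"
  unfolding Phi_def
  by (intro nn_integral_mono) (auto simp: indicator_def assms ennreal_leI)

lemma Phi_sum:
  assumes "\<And>i. i \<in> S \<Longrightarrow> h i \<in> borel_measurable borel" "\<And>i t. i \<in> S \<Longrightarrow> 0 \<le> h i t"
  shows "Phi (\<lambda>t. \<Sum>i\<in>S. h i t) = (\<Sum>i\<in>S. Phi (h i))"
proof -
  have "Phi (\<lambda>t. \<Sum>i\<in>S. h i t) = (\<integral>\<^sup>+t. (\<Sum>i\<in>S. ennreal (h i t) * indicator {0..} t) \<partial>lborel)"
    unfolding Phi_def using assms(2)
    by (intro nn_integral_cong) (simp add: sum_distrib_right[symmetric] sum_ennreal)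
  also have "\<dots> = (\<Sum>i\<in>S. Phi (h i))"
    unfolding Phi_def using assms(1) by (subst nn_integral_sum) auto
  finally show ?thesis .
qed

lemma Phi_cmult:
  assumes "h \<in> borel_measurable borel" "c \<ge> 0"
  shows "Phi (\<lambda>t. c * h t) = ennreal c * Phi h"
proof -
  have "Phi (\<lambda>t. c * h t) = (\<integral>\<^sup>+t. ennreal c * (ennreal (h t) * indicator {0..} t) \<partial>lborel)"
    unfolding Phi_def using assms(2)
    by (intro nn_integral_cong) (simp add: ennreal_mult' mult.assoc)
  also have "\<dots> = ennreal c * Phi h"
    unfolding Phi_def using assms(1) by (subst nn_integral_cmult) auto
  finally show ?thesis .
qed

lemma Phi_scale:
  assumes [measurable]: "h \<in> borel_measurable borel" and d: "d > 0"
  shows "Phi (\<lambda>t. h (t / d)) = ennreal d * Phi h"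
proof -
  have "Phi (\<lambda>t. h (t / d)) = ennreal \<bar>d\<bar> * (\<integral>\<^sup>+u. ennreal (h ((0 + d * u) / d)) * indicator {0..} (0 + d * u) \<partial>lborel)"
    unfolding Phi_def using d by (intro nn_integral_real_affine) auto
  also have "(\<integral>\<^sup>+u. ennreal (h ((0 + d * u) / d)) * indicator {0..} (0 + d * u) \<partial>lborel) = Phi h"
    unfolding Phi_def using d
    by (intro nn_integral_cong) (simp add: indicator_def zero_le_mult_iff)
  finally show ?thesis using d by simp
qed

lemma finite_MI: "finite (MI m n)"
proof -
  have "MI m n \<subseteq> {xs. set xs \<subseteq> {1..n} \<and> length xs = m}" unfolding MI_def by auto
  then show ?thesis by (rule finite_subset) (simp add: finite_lists_length_eq)
qed

lemma JI_sub: "JI m n \<subseteq> MI m n" unfolding JI_def by auto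

lemma finite_JI: "finite (JI m n)" using finite_subset[OF JI_sub finite_MI] .

lemma sort_in_JI: "i \<in> MI m n \<Longrightarrow> sort i \<in> JI m n"
  unfolding JI_def MI_def by auto

lemma perm_class_sort:
  assumes "j \<in> JI m n"
  shows "perm_class m n j = {i \<in> MI m n. sort i = j}"
proof -
  have "sort i = j \<longleftrightarrow> mset i = mset j" for i
  proof
    assume "sort i = j" then show "mset i = mset j" by auto
  next
    assume "mset i = mset j" then show "sort i = j"
      using assms properties_for_sort[of j i] unfolding JI_def by auto
  qed
  then show ?thesis unfolding perm_class_def by auto
qed

lemma finite_perm_class: "finite (perm_class m n j)"
  unfolding perm_class_def using finite_MI by auto

lemma perm_class_ge1: "j \<in> MI m n \<Longrightarrow> card (perm_class m n j) \<ge> 1"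
proof -
  assume "j \<in> MI m n"
  then have "j \<in> perm_class m n j" unfolding perm_class_def by auto
  then show ?thesis using finite_perm_class by (metis One_nat_def Suc_leI card_gt_0_iff empty_iff)
qed

lemma perm_class_le: "j \<in> MI m n \<Longrightarrow> card (perm_class m n j) \<le> 2 ^ (m * m)"
proof -
  assume j: "j \<in> MI m n"
  have "perm_class m n j \<subseteq> {xs. set xs \<subseteq> set j \<and> length xs = m}"
    unfolding perm_class_def MI_def using mset_eq_setD by fastforce
  then have "card (perm_class m n j) \<le> card {xs. set xs \<subseteq> set j \<and> length xs = m}"
    by (intro card_mono) (auto simp: finite_lists_length_eq)
  also have "\<dots> = card (set j) ^ m" by (simp add: card_lists_length_eq)
  also have "\<dots> \<le> m ^ m" using j card_length[of j] unfolding MI_def by (intro power_mono) auto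
  also have "\<dots> \<le> (2 ^ m) ^ m" by (intro power_mono) (auto intro: less_imp_le less_exp)
  also have "\<dots> = 2 ^ (m * m)" by (simp add: power_mult)
  finally show ?thesis .
qed

lemma sym_sort:
  assumes "symmetric_mat m n a" "i \<in> MI m n"
  shows "a (sort i) = a i"
proof -
  have "sort i \<in> perm_class m n i" using sort_in_JI[OF assms(2)] JI_sub unfolding perm_class_def by auto
  then show ?thesis using assms unfolding symmetric_mat_def by auto
qed

lemma decr_rearr_nonneg: "v \<in> set (decr_rearr I x) \<Longrightarrow> v \<ge> 0"
  unfolding decr_rearr_def by auto

lemma lorentz_nonneg:
  assumes "finite I" "p > 0"
  shows "lorentz_norm p I x \<ge> 0"
  unfolding lorentz_norm_def
proof (intro sum_nonneg mult_nonneg_nonneg)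
  fix k assume k: "k \<in> {..<card I}"
  have "length (decr_rearr I x) = card I" unfolding decr_rearr_def using assms
    by (metis length_rev mset_sorted_list_of_multiset size_image_mset size_mset size_mset_set)
  then show "decr_rearr I x ! k \<ge> 0" using k by (intro decr_rearr_nonneg[of _ I x]) auto
  show "0 \<le> real (Suc k) powr (1 / p) - real k powr (1 / p)" using assms by (simp add: powr_mono2)
qed

lemma K_bound:
  fixes m :: nat
  assumes "m \<ge> 1"
  shows "2 powr ((real m + 1) / (2 * real m)) * real (m * m + 1) powr (1 - (real m + 1) / (2 * real m)) \<le> 4 * real m"
proof -
  define \<alpha> where "\<alpha> = (real m + 1) / (2 * real m)"
  have m: "real m \<ge> 1" using assms by simp
  have a1: "\<alpha> \<le> 1" unfolding \<alpha>_def using m by (simp add: divide_simps)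
  have a2: "1 - \<alpha> \<le> 1/2" unfolding \<alpha>_def using m by (simp add: divide_simps)
  have "2 powr \<alpha> \<le> 2 powr 1" using a1 by (intro powr_mono) auto
  hence 1: "2 powr \<alpha> \<le> 2" by simp
  have "real (m * m + 1) powr (1 - \<alpha>) \<le> real (m * m + 1) powr (1/2)" using a2 by (intro powr_mono) auto
  also have "\<dots> = sqrt (real (m * m + 1))" by (simp add: powr_half_sqrt)
  also have "\<dots> \<le> sqrt ((2 * real m)^2)"
  proof (intro real_sqrt_le_mono)
    have "1 \<le> real m * real m" using m mult_mono[of 1 "real m" 1 "real m"] by simp
    then show "real (m * m + 1) \<le> (2 * real m)^2" by (simp add: power2_eq_square)
  qed
  also have "\<dots> = 2 * real m" by (rule real_sqrt_unique) (use m in auto)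
  finally have 2: "real (m * m + 1) powr (1 - \<alpha>) \<le> 2 * real m" .
  have "2 powr \<alpha> * real (m * m + 1) powr (1 - \<alpha>) \<le> 2 * (2 * real m)"
    using 1 2 by (intro mult_mono) auto
  then show ?thesis unfolding \<alpha>_def by simp
qed

lemma main_bound:
  fixes m n :: nat and a :: "nat list \<Rightarrow> complex"
  assumes m1: "m \<ge> 1" and sym: "symmetric_mat m n a"
  shows "lorentz_norm (2 * real m / (real m + 1)) (JI m n)
           (\<lambda>j. complex_of_real (real (card (perm_class m n j)) powr ((real m + 1) / (2 * real m))) * a j)
         \<le> 4 * real m * lorentz_norm (2 * real m / (real m + 1)) (MI m n) a"
proof -
  define \<alpha> where "\<alpha> = (real m + 1) / (2 * real m)"
  define p where "p = 2 * real m / (real m + 1)"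
  have mr: "real m \<ge> 1" using m1 by simp
  have p: "p > 0" unfolding p_def using mr by simp
  have pa: "1 / p = \<alpha>" unfolding p_def \<alpha>_def by simp
  have \<alpha>0: "\<alpha> > 0" unfolding \<alpha>_def using mr by simp
  have \<alpha>1: "\<alpha> \<le> 1" unfolding \<alpha>_def using mr by (simp add: divide_simps)
  define M where "M = MI m n"
  define J where "J = JI m n"
  have finM: "finite M" and finJ: "finite J" unfolding M_def J_def by (auto simp: finite_MI finite_JI)
  define c where "c = (\<lambda>j. card (perm_class m n j))"
  define x where "x = (\<lambda>j. cmod (a j))"
  define y where "y = (\<lambda>j. real (c j) powr \<alpha> * x j)"
  define g where "g = (\<lambda>j. floor_log (c j))"
  define R where "R = m * m + 1"
  define Jr where "Jr = (\<lambda>r. {j\<in>J. g j = r})"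
  define lam where "lam = (\<lambda>r::nat. 2 powr (real (Suc r) * \<alpha>))"
  have finJr: "finite (Jr r)" for r unfolding Jr_def using finJ by simp
  have x0: "x j \<ge> 0" for j unfolding x_def by simp
  have c1: "c j \<ge> 1" if "j \<in> J" for j
    unfolding c_def using perm_class_ge1 that JI_sub unfolding J_def by blast
  have glow: "2 ^ g j \<le> c j" if "j \<in> J" for j
    unfolding g_def using c1[OF that] by (intro floor_log_exp2_le) simp
  have ghigh: "c j < 2 ^ Suc (g j)" for j
    unfolding g_def using floor_log_exp2_gt[of "c j"] by simp
  have gR: "g j < R" if "j \<in> J" for j
  proof -
    have "j \<in> MI m n" using that JI_sub unfolding J_def by blast
    then have "c j \<le> 2 ^ (m * m)" unfolding c_def by (rule perm_class_le)
    then have "2 ^ g j \<le> (2::nat) ^ (m * m)" using glow[OF that] by linarith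
    then have "g j \<le> m * m" by (rule power_le_imp_le_exp[rotated]) simp
    then show ?thesis unfolding R_def by simp
  qed
  have lam0: "lam r > 0" for r unfolding lam_def by simp
  have clam: "real (c j) powr \<alpha> \<le> lam (g j)" for j
  proof -
    have "real (c j) \<le> real (2 ^ Suc (g j))" using ghigh[of j] by linarith
    then have "real (c j) powr \<alpha> \<le> (2 ^ Suc (g j)) powr \<alpha>" using \<alpha>0 by (intro powr_mono2) auto
    also have "(2 ^ Suc (g j)) powr \<alpha> = lam (g j)" unfolding lam_def
      by (simp add: powr_realpow[symmetric] powr_powr del: power_Suc)
    finally show ?thesis .
  qed
  have cm: "cmod (complex_of_real (real (card (perm_class m n j)) powr \<alpha>) * a j) = y j" for j
    unfolding y_def c_def x_def by (simp add: norm_mult)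
  have E0: "ennreal (lorentz_norm p J (\<lambda>j. complex_of_real (real (card (perm_class m n j)) powr \<alpha>) * a j))
      = Phi (\<lambda>t. real (card {j\<in>J. y j > t}) powr \<alpha>)"
    using layer_cake[OF finJ p, of "\<lambda>j. complex_of_real (real (card (perm_class m n j)) powr \<alpha>) * a j"]
    unfolding pa cm by simp
  have E10: "ennreal (lorentz_norm p M a) = Phi (\<lambda>t. real (card {i\<in>M. x i > t}) powr \<alpha>)"
    using layer_cake[OF finM p, of a] unfolding pa x_def by simp
  define T where "T = (\<lambda>r s. \<Sum>j\<in>{j\<in>Jr r. x j > s}. real (c j))"
  have measT[measurable]: "T r \<in> borel_measurable borel" for r
    unfolding T_def using meas_wcnt[OF finJr] by blast
  have T0: "T r s \<ge> 0" for r s unfolding T_def by (simp add: sum_nonneg)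
  have part: "card {j\<in>J. y j > t} = (\<Sum>r<R. card {j\<in>Jr r. y j > t})" for t
  proof -
    have "(\<Sum>r<R. card {j\<in>Jr r. y j > t}) = (\<Sum>r\<in>{..<R}. \<Sum>j\<in>{j. j \<in> {j\<in>J. y j > t} \<and> g j = r}. 1)"
      unfolding Jr_def by (intro sum.cong) (auto intro!: arg_cong[where f=card])
    also have "\<dots> = (\<Sum>j\<in>{j\<in>J. y j > t}. 1)"
      using finJ gR by (intro sum.group) auto
    finally show ?thesis by simp
  qed
  have E1: "Phi (\<lambda>t. real (card {j\<in>J. y j > t}) powr \<alpha>)
      \<le> Phi (\<lambda>t. \<Sum>r<R. real (card {j\<in>Jr r. y j > t}) powr \<alpha>)"
  proof (rule Phi_mono)
    fix t :: real
    have "real (card {j\<in>J. y j > t}) powr \<alpha> = (\<Sum>r<R. real (card {j\<in>Jr r. y j > t})) powr \<alpha>"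
      by (simp add: part)
    also have "\<dots> \<le> (\<Sum>r<R. real (card {j\<in>Jr r. y j > t}) powr \<alpha>)"
      using \<alpha>0 \<alpha>1 by (intro powr_subadd_sum) auto
    finally show "real (card {j\<in>J. y j > t}) powr \<alpha> \<le> (\<Sum>r<R. real (card {j\<in>Jr r. y j > t}) powr \<alpha>)" .
  qed
  have measC[measurable]: "(\<lambda>t. real (card {j\<in>Jr r. y j > t})) \<in> borel_measurable borel" for r
    using meas_card[OF finJr] by blast
  have E2: "Phi (\<lambda>t. \<Sum>r<R. real (card {j\<in>Jr r. y j > t}) powr \<alpha>)
      = (\<Sum>r<R. Phi (\<lambda>t. real (card {j\<in>Jr r. y j > t}) powr \<alpha>))"
    by (rule Phi_sum) auto
  have E3: "Phi (\<lambda>t. real (card {j\<in>Jr r. y j > t}) powr \<alpha>)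
      \<le> ennreal (2 powr \<alpha>) * Phi (\<lambda>s. T r s powr \<alpha>)" for r
  proof -
    define h where "h = (\<lambda>s. 2 powr (- (real r * \<alpha>)) * T r s powr \<alpha>)"
    have measH[measurable]: "h \<in> borel_measurable borel" unfolding h_def by measurable
    have "Phi (\<lambda>t. real (card {j\<in>Jr r. y j > t}) powr \<alpha>) \<le> Phi (\<lambda>t. h (t / lam r))"
    proof (rule Phi_mono)
      fix t :: real
      have sub: "{j\<in>Jr r. y j > t} \<subseteq> {j\<in>Jr r. x j > t / lam r}"
      proof
        fix j assume "j \<in> {j\<in>Jr r. y j > t}"
        then have j: "j \<in> Jr r" "y j > t" by auto
        have "y j \<le> lam r * x j" unfolding y_def
          using clam[of j] j(1) x0[of j] unfolding Jr_def by (intro mult_right_mono) auto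
        then have "t < lam r * x j" using j by linarith
        then have "t / lam r < x j" using lam0[of r] by (simp add: divide_less_eq mult.commute)
        then show "j \<in> {j\<in>Jr r. x j > t / lam r}" using j by auto
      qed
      have "real (card {j\<in>Jr r. y j > t}) \<le> real (card {j\<in>Jr r. x j > t / lam r})"
        using sub finJr by (simp add: card_mono)
      also have "\<dots> \<le> 2 powr (- real r) * T r (t / lam r)"
      proof -
        have "real (card {j\<in>Jr r. x j > t / lam r}) * 2 ^ r = (\<Sum>j\<in>{j\<in>Jr r. x j > t / lam r}. 2 ^ r)"
          by simp
        also have "\<dots> \<le> T r (t / lam r)" unfolding T_def
        proof (intro sum_mono)
          fix j assume "j \<in> {j\<in>Jr r. x j > t / lam r}"
          then have "j \<in> J" "g j = r" unfolding Jr_def by auto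
          then show "(2::real) ^ r \<le> real (c j)" using glow by (metis of_nat_le_iff of_nat_numeral of_nat_power)
        qed
        finally have "real (card {j\<in>Jr r. x j > t / lam r}) * 2 ^ r \<le> T r (t / lam r)" .
        then show ?thesis by (simp add: powr_minus powr_realpow divide_simps mult.commute)
      qed
      finally have "real (card {j\<in>Jr r. y j > t}) powr \<alpha> \<le> (2 powr (- real r) * T r (t / lam r)) powr \<alpha>"
        using \<alpha>0 by (intro powr_mono2) auto
      also have "\<dots> = h (t / lam r)" unfolding h_def
        using T0 by (simp add: powr_mult powr_powr)
      finally show "real (card {j\<in>Jr r. y j > t}) powr \<alpha> \<le> h (t / lam r)" .
    qed
    also have "\<dots> = ennreal (lam r) * Phi h" using lam0 by (intro Phi_scale) auto
    also have "Phi h = ennreal (2 powr (- (real r * \<alpha>))) * Phi (\<lambda>s. T r s powr \<alpha>)"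
      unfolding h_def by (intro Phi_cmult) auto
    also have "ennreal (lam r) * (ennreal (2 powr (- (real r * \<alpha>))) * Phi (\<lambda>s. T r s powr \<alpha>))
        = ennreal (lam r * 2 powr (- (real r * \<alpha>))) * Phi (\<lambda>s. T r s powr \<alpha>)"
      using lam0[of r] by (simp add: ennreal_mult mult.assoc)
    also have "lam r * 2 powr (- (real r * \<alpha>)) = 2 powr \<alpha>"
      unfolding lam_def by (simp add: powr_add[symmetric] algebra_simps)
    finally show ?thesis .
  qed
  have E7: "(\<Sum>r<R. ennreal (2 powr \<alpha>) * Phi (\<lambda>s. T r s powr \<alpha>))
      = ennreal (2 powr \<alpha>) * Phi (\<lambda>s. \<Sum>r<R. T r s powr \<alpha>)"
    by (subst Phi_sum) (auto simp: sum_distrib_left T0)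
  have sumT: "(\<Sum>r<R. T r s) = real (card {i\<in>M. x i > s})" for s
  proof -
    have "(\<Sum>r<R. T r s) = (\<Sum>r\<in>{..<R}. \<Sum>j\<in>{j. j \<in> {j\<in>J. x j > s} \<and> g j = r}. real (c j))"
      unfolding T_def Jr_def by (intro sum.cong) (auto intro!: sum.cong)
    also have "\<dots> = (\<Sum>j\<in>{j\<in>J. x j > s}. real (c j))"
      using finJ gR by (intro sum.group) auto
    also have "\<dots> = real (\<Sum>j\<in>{j\<in>J. x j > s}. c j)" by simp
    also have "(\<Sum>j\<in>{j\<in>J. x j > s}. c j) = (\<Sum>j\<in>{j\<in>J. x j > s}. \<Sum>i\<in>{i. i \<in> {i\<in>M. x i > s} \<and> sort i = j}. 1)"
    proof (intro sum.cong refl)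
      fix j assume j: "j \<in> {j\<in>J. x j > s}"
      have "{i. i \<in> {i\<in>M. x i > s} \<and> sort i = j} = perm_class m n j"
      proof -
        have "x i = x j" if "i \<in> M" "sort i = j" for i
          using sym_sort[OF sym, of i] that unfolding M_def x_def by simp
        then show ?thesis using perm_class_sort[of j m n] j unfolding J_def M_def by auto
      qed
      then show "c j = (\<Sum>i\<in>{i. i \<in> {i\<in>M. x i > s} \<and> sort i = j}. 1)" unfolding c_def by simp
    qed
    also have "\<dots> = (\<Sum>i\<in>{i\<in>M. x i > s}. 1)"
    proof (intro sum.group)
      show "finite {i\<in>M. x i > s}" using finM by simp
      show "finite {j\<in>J. x j > s}" using finJ by simp
      show "sort ` {i\<in>M. x i > s} \<subseteq> {j\<in>J. x j > s}"
      proof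
        fix j assume "j \<in> sort ` {i\<in>M. x i > s}"
        then obtain i where i: "i \<in> M" "x i > s" "j = sort i" by auto
        have "x j = x i" using sym_sort[OF sym, of i] i unfolding M_def x_def by simp
        then show "j \<in> {j\<in>J. x j > s}" using i sort_in_JI unfolding M_def J_def by auto
      qed
    qed
    finally show ?thesis by simp
  qed
  have E8: "Phi (\<lambda>s. \<Sum>r<R. T r s powr \<alpha>) \<le> ennreal (real R powr (1 - \<alpha>)) * Phi (\<lambda>t. real (card {i\<in>M. x i > t}) powr \<alpha>)"
  proof -
    have "Phi (\<lambda>s. \<Sum>r<R. T r s powr \<alpha>) \<le> Phi (\<lambda>s. real R powr (1 - \<alpha>) * real (card {i\<in>M. x i > s}) powr \<alpha>)"
    proof (rule Phi_mono)
      fix s :: real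
      have "(\<Sum>r<R. T r s powr \<alpha>) \<le> real (card {..<R}) powr (1 - \<alpha>) * (\<Sum>r<R. T r s) powr \<alpha>"
        using \<alpha>0 \<alpha>1 T0 unfolding R_def by (intro powr_holder_sum) auto
      then show "(\<Sum>r<R. T r s powr \<alpha>) \<le> real R powr (1 - \<alpha>) * real (card {i\<in>M. x i > s}) powr \<alpha>"
        by (simp add: sumT)
    qed
    also have "\<dots> = ennreal (real R powr (1 - \<alpha>)) * Phi (\<lambda>t. real (card {i\<in>M. x i > t}) powr \<alpha>)"
      using meas_card[OF finM] by (intro Phi_cmult) auto
    finally show ?thesis .
  qed
  define K where "K = 2 powr \<alpha> * real R powr (1 - \<alpha>)"
  have "ennreal (lorentz_norm p J (\<lambda>j. complex_of_real (real (card (perm_class m n j)) powr \<alpha>) * a j))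
      \<le> (\<Sum>r<R. ennreal (2 powr \<alpha>) * Phi (\<lambda>s. T r s powr \<alpha>))"
    unfolding E0 using E1 E2 E3 by (metis (no_types, lifting) order_trans sum_mono)
  also have "\<dots> \<le> ennreal (2 powr \<alpha>) * (ennreal (real R powr (1 - \<alpha>)) * ennreal (lorentz_norm p M a))"
    unfolding E7 E10 using E8 by (intro mult_left_mono) auto
  also have "\<dots> = ennreal (K * lorentz_norm p M a)"
    unfolding K_def
    using ennreal_mult'[of "2 powr \<alpha>" "real R powr (1 - \<alpha>) * lorentz_norm p M a"]
      ennreal_mult'[of "real R powr (1 - \<alpha>)" "lorentz_norm p M a"]
    by (simp add: mult.assoc)
  finally have "lorentz_norm p J (\<lambda>j. complex_of_real (real (card (perm_class m n j)) powr \<alpha>) * a j) \<le> K * lorentz_norm p M a"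
    using lorentz_nonneg[OF finM p, of a] by (subst (asm) ennreal_le_iff) (auto simp: K_def)
  also have "\<dots> \<le> 4 * real m * lorentz_norm p M a"
    using K_bound[OF m1] lorentz_nonneg[OF finM p, of a] unfolding K_def R_def \<alpha>_def
    by (intro mult_right_mono) auto
  finally show ?thesis unfolding p_def \<alpha>_def M_def J_def .
qed


theorem lemma5p4:
  shows "\<exists>L::real. L > 0 \<and>
    (\<forall>m n::nat. m \<ge> 1 \<longrightarrow> n \<ge> 1 \<longrightarrow>
      (\<forall>a :: nat list \<Rightarrow> complex. symmetric_mat m n a \<longrightarrow>
         lorentz_norm (2 * real m / (real m + 1)) (JI m n)
           (\<lambda>j. complex_of_real (real (card (perm_class m n j)) powr ((real m + 1) / (2 * real m))) * a j)
         \<le> L * real m * lorentz_norm (2 * real m / (real m + 1)) (MI m n) a))"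
  by (rule exI[of _ 4]) (auto intro: main_bound)

end
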